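(* For every $n\ge3$ there exist perfect copositive $n\times n$ matrices in $(\mathcal{S}^n_{\ge0}+\mathcal{N}^n)\setminus(\mathcal{S}^n_{\ge0}\cup\mathcal{N}^n)$, i.e.\ perfect copositive matrices that are sums of a positive semidefinite and a nonnegative matrix but are themselves neither positive semidefinite nor entrywise nonnegative.
   Context: $\mathcal{S}^n$: real symmetric $n\times n$ matrices; $\mathcal{S}^n_{\ge0}$: positive semidefinite ones; $\mathcal{N}^n$: entrywise nonnegative symmetric ones; $B[v]=v^\top Bv$; $\mathcal{COP}^n=\{B\in\mathcal{S}^n: B[x]\ge0\ \forall x\in\mathbb{R}^n_{\ge0}\}$; strictly copositive means lying in the interior of $\mathcal{COP}^n$. $\min_{\mathcal{COP}}B=\inf\{B[v]: v\in\mathbb{Z}^n_{\ge0}\setminus\{0\}\}$, $\operatorname{Min}_{\mathcal{COP}}B=\{v\in\mathbb{Z}^n_{\ge0}: B[v]=\min_{\mathcal{COP}}B\}$. A strictly copositive $P$ is perfect copositive if it is the unique $Q\in\mathcal{S}^n$ with $Q[v]=\min_{\mathcal{COP}}P$ for all $v\in\operatorname{Min}_{\mathcal{COP}}P$. *)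

theory Defs
  imports "HOL-Analysis.Analysis"
begin

text \<open>Real n x n matrices are represented as real^'n^'n, with n = CARD('n).\<close>

definition sym_mat :: "real^'n^'n \<Rightarrow> bool" where
  "sym_mat A \<longleftrightarrow> transpose A = A"

definition qform :: "real^'n^'n \<Rightarrow> real^'n \<Rightarrow> real" where
  "qform B v = v \<bullet> (B *v v)"

definition psd_mat :: "real^'n^'n \<Rightarrow> bool" where
  "psd_mat A \<longleftrightarrow> sym_mat A \<and> (\<forall>v. qform A v \<ge> 0)"

definition nonneg_mat :: "real^'n^'n \<Rightarrow> bool" where
  "nonneg_mat A \<longleftrightarrow> sym_mat A \<and> (\<forall>i j. A $ i $ j \<ge> 0)"

definition copositive :: "real^'n^'n \<Rightarrow> bool" where
  "copositive B \<longleftrightarrow> sym_mat B \<and> (\<forall>x. (\<forall>i. x $ i \<ge> 0) \<longrightarrow> qform B x \<ge> 0)"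

text \<open>Strictly copositive: interior of COP^n, taken in the space S^n of symmetric matrices.\<close>
definition strictly_copositive :: "real^'n^'n \<Rightarrow> bool" where
  "strictly_copositive B \<longleftrightarrow> copositive B \<and>
     (\<exists>e>0. \<forall>C. sym_mat C \<and> dist C B < e \<longrightarrow> copositive C)"

definition nonneg_int_vecs :: "(real^'n) set" where
  "nonneg_int_vecs = {v. \<forall>i. v $ i \<in> \<int> \<and> v $ i \<ge> 0}"

definition min_cop :: "real^'n^'n \<Rightarrow> real" where
  "min_cop B = Inf ((qform B) ` (nonneg_int_vecs - {0}))"

definition Min_cop :: "real^'n^'n \<Rightarrow> (real^'n) set" where
  "Min_cop B = {v \<in> nonneg_int_vecs. qform B v = min_cop B}"

definition perfect_copositive :: "real^'n^'n \<Rightarrow> bool" where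
  "perfect_copositive P \<longleftrightarrow> strictly_copositive P \<and>
     (\<forall>Q. sym_mat Q \<and> (\<forall>v \<in> Min_cop P. qform Q v = min_cop P) \<longleftrightarrow> Q = P)"

end

theory Submission imports Defs begin

definition pi3 :: "'n \<Rightarrow> 'n \<Rightarrow> 'n \<Rightarrow> nat" where
  "pi3 b c i = (if i = b then 1 else if i = c then 2 else 0)"

definition liftm :: "'n::finite \<Rightarrow> 'n \<Rightarrow> (nat \<Rightarrow> nat \<Rightarrow> real) \<Rightarrow> real^'n^'n" where
  "liftm b c m = (\<chi> i j. m (pi3 b c i) (pi3 b c j))"

definition Yv :: "'n::finite \<Rightarrow> 'n \<Rightarrow> real^'n \<Rightarrow> nat \<Rightarrow> real" where
  "Yv b c x r = (\<Sum>j\<in>UNIV. if pi3 b c j = r then x$j else 0)"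

lemma pi3_lt: "pi3 b c i < 3" by (simp add: pi3_def)

lemma regroup:
  fixes h :: "'n::finite \<Rightarrow> real"
  shows "(\<Sum>j\<in>UNIV. h j) = (\<Sum>r<3. \<Sum>j\<in>UNIV. if pi3 b c j = r then h j else 0)"
proof -
  have "(\<Sum>r<3. \<Sum>j\<in>UNIV. if pi3 b c j = r then h j else 0)
       = (\<Sum>j\<in>UNIV. \<Sum>r<3. if pi3 b c j = r then h j else 0)" by (rule sum.swap)
  also have "\<dots> = (\<Sum>j\<in>UNIV. h j)" using pi3_lt[of b c] by simp
  finally show ?thesis by simp
qed

lemma inner_regroup:
  fixes g :: "nat \<Rightarrow> real"
  shows "(\<Sum>j\<in>UNIV. g (pi3 b c j) * x$j) = (\<Sum>s<3. g s * Yv b c x s)"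
proof -
  have "(\<Sum>j\<in>UNIV. g (pi3 b c j) * x$j) = (\<Sum>s<3. \<Sum>j\<in>UNIV. if pi3 b c j = s then g (pi3 b c j) * x$j else 0)"
    by (rule regroup)
  also have "\<dots> = (\<Sum>s<3. \<Sum>j\<in>UNIV. g s * (if pi3 b c j = s then x$j else 0))"
    by (intro sum.cong refl) auto
  also have "\<dots> = (\<Sum>s<3. g s * Yv b c x s)"
    by (simp add: Yv_def sum_distrib_left)
  finally show ?thesis .
qed

lemma qform_lift:
  "qform (liftm b c m) x = (\<Sum>r<3. \<Sum>s<3. m r s * Yv b c x r * Yv b c x s)"
proof -
  have "qform (liftm b c m) x = (\<Sum>i\<in>UNIV. x$i * (\<Sum>j\<in>UNIV. m (pi3 b c i) (pi3 b c j) * x$j))"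
    by (simp add: qform_def inner_vec_def matrix_vector_mult_def liftm_def)
  also have "\<dots> = (\<Sum>i\<in>UNIV. (\<Sum>s<3. m (pi3 b c i) s * Yv b c x s) * x$i)"
  proof (intro sum.cong refl)
    fix i
    have "(\<Sum>j\<in>UNIV. m (pi3 b c i) (pi3 b c j) * x$j) = (\<Sum>s<3. m (pi3 b c i) s * Yv b c x s)"
      by (rule inner_regroup)
    then show "x$i * (\<Sum>j\<in>UNIV. m (pi3 b c i) (pi3 b c j) * x$j) = (\<Sum>s<3. m (pi3 b c i) s * Yv b c x s) * x$i"
      by simp
  qed
  also have "\<dots> = (\<Sum>r<3. (\<Sum>s<3. m r s * Yv b c x s) * Yv b c x r)"
    by (rule inner_regroup)
  also have "\<dots> = (\<Sum>r<3. \<Sum>s<3. m r s * Yv b c x r * Yv b c x s)"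
    by (simp add: sum_distrib_left sum_distrib_right mult_ac)
  finally show ?thesis .
qed

lemma sum3: "(\<Sum>r<3. (f::nat\<Rightarrow>real) r) = f 0 + f 1 + f 2"
  by (simp add: eval_nat_numeral)

lemma sform_pos:
  fixes y0 y1 y2 :: real
  shows "y0^2 + 3*y1^2 + 7*y2^2 + 16/5*y0*y1 - 5*y0*y2 - 9*y1*y2 \<ge> (y0^2+y1^2+y2^2)/100"
proof -
  have e: "y0^2 + 3*y1^2 + 7*y2^2 + 16/5*y0*y1 - 5*y0*y2 - 9*y1*y2 - (y0^2+y1^2+y2^2)/100
     = 99/100*(y0 + 160/99*y1 - 250/99*y2)^2 + 4001/9900*(y1 - 4550/4001*y2)^2 + 61699/400100*y2^2"
    by (simp add: power2_eq_square field_simps)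
  have "0 \<le> 99/100*(y0 + 160/99*y1 - 250/99*y2)^2 + 4001/9900*(y1 - 4550/4001*y2)^2 + 61699/400100*y2^2"
    by simp
  then show ?thesis using e by linarith
qed

definition p3 :: "nat \<Rightarrow> nat \<Rightarrow> real" where
  "p3 r s = (if r = s then (if r = 0 then 1 else if r = 1 then 3 else 7)
             else if r + s = 1 then 2 else if r + s = 2 then -5/2 else -9/2)"
definition s3 :: "nat \<Rightarrow> nat \<Rightarrow> real" where
  "s3 r s = (if r = s then (if r = 0 then 1 else if r = 1 then 3 else 7)
             else if r + s = 1 then 8/5 else if r + s = 2 then -5/2 else -9/2)"
definition n3 :: "nat \<Rightarrow> nat \<Rightarrow> real" where
  "n3 r s = (if r \<noteq> s \<and> r + s = 1 then 2/5 else 0)"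

abbreviation "YY b c x \<equiv> Yv b c x"

lemma qform_p3: "qform (liftm b c p3) x =
   Yv b c x 0^2 + 3*Yv b c x 1^2 + 7*Yv b c x 2^2 + 4*Yv b c x 0*Yv b c x 1
   - 5*Yv b c x 0*Yv b c x 2 - 9*Yv b c x 1*Yv b c x 2"
  by (simp add: qform_lift sum3 p3_def power2_eq_square algebra_simps)

lemma qform_s3: "qform (liftm b c s3) x =
   Yv b c x 0^2 + 3*Yv b c x 1^2 + 7*Yv b c x 2^2 + 16/5*Yv b c x 0*Yv b c x 1
   - 5*Yv b c x 0*Yv b c x 2 - 9*Yv b c x 1*Yv b c x 2"
  by (simp add: qform_lift sum3 s3_def power2_eq_square algebra_simps)

lemma sum_sq_le:
  fixes f :: "'a \<Rightarrow> real"
  assumes "finite A" "\<And>i. i \<in> A \<Longrightarrow> f i \<ge> 0"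
  shows "(\<Sum>i\<in>A. f i * f i) \<le> (\<Sum>i\<in>A. f i)^2"
proof -
  have "(\<Sum>i\<in>A. f i)^2 = (\<Sum>i\<in>A. \<Sum>j\<in>A. f i * f j)"
    by (simp add: power2_eq_square sum_product)
  moreover have "(\<Sum>i\<in>A. f i * f i) \<le> (\<Sum>i\<in>A. \<Sum>j\<in>A. f i * f j)"
  proof (rule sum_mono)
    fix i assume i: "i \<in> A"
    show "f i * f i \<le> (\<Sum>j\<in>A. f i * f j)"
      by (rule member_le_sum[where f="\<lambda>j. f i * f j"]) (use i assms in auto)
  qed
  ultimately show ?thesis by simp
qed

lemma Yv_nonneg: "(\<forall>i. x$i \<ge> 0) \<Longrightarrow> Yv b c x r \<ge> 0"
  unfolding Yv_def by (intro sum_nonneg) auto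

lemma norm_le_Y:
  assumes "\<forall>i. (x::real^'n::finite)$i \<ge> 0"
  shows "norm x ^ 2 \<le> Yv b c x 0^2 + Yv b c x 1^2 + Yv b c x 2^2"
proof -
  have "norm x ^ 2 = (\<Sum>j\<in>UNIV. x$j * x$j)"
    by (simp add: power2_norm_eq_inner inner_vec_def)
  also have "\<dots> = (\<Sum>r<3. \<Sum>j\<in>UNIV. if pi3 b c j = r then x$j * x$j else 0)"
    by (rule regroup)
  also have "\<dots> \<le> (\<Sum>r<3. Yv b c x r ^ 2)"
  proof (rule sum_mono)
    fix r
    have "(\<Sum>j\<in>UNIV. if pi3 b c j = r then x$j * x$j else 0)
        = (\<Sum>j\<in>UNIV. (if pi3 b c j = r then x$j else 0) * (if pi3 b c j = r then x$j else 0))"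
      by (intro sum.cong) auto
    also have "\<dots> \<le> Yv b c x r ^ 2"
      unfolding Yv_def by (rule sum_sq_le) (use assms in auto)
    finally show "(\<Sum>j\<in>UNIV. if pi3 b c j = r then x$j * x$j else 0) \<le> Yv b c x r ^ 2" .
  qed
  finally show ?thesis by (simp add: sum3)
qed

lemma poly_lower:
  fixes u0 u1 u2 N :: real
  assumes "0 \<le> u0*u1" "N \<le> u0^2+u1^2+u2^2"
  shows "N/100 \<le> u0^2 + 3*u1^2 + 7*u2^2 + 4*u0*u1 - 5*u0*u2 - 9*u1*u2"
proof -
  have e: "u0^2 + 3*u1^2 + 7*u2^2 + 4*u0*u1 - 5*u0*u2 - 9*u1*u2
     = (u0^2 + 3*u1^2 + 7*u2^2 + 16/5*u0*u1 - 5*u0*u2 - 9*u1*u2) + 4/5*(u0*u1)"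
    by (simp add: algebra_simps)
  have "N/100 \<le> (u0^2+u1^2+u2^2)/100" using assms(2) by simp
  moreover note sform_pos[of u0 u1 u2]
  moreover have "u0^2 + 3*u1^2 + 7*u2^2 + 16/5*u0*u1 - 5*u0*u2 - 9*u1*u2
     \<le> (u0^2 + 3*u1^2 + 7*u2^2 + 16/5*u0*u1 - 5*u0*u2 - 9*u1*u2) + 4/5*(u0*u1)" using assms(1) by simp
  ultimately show ?thesis unfolding e by linarith
qed

lemma qP_lower:
  assumes "\<forall>i. (x::real^'n::finite)$i \<ge> 0"
  shows "qform (liftm b c p3) x \<ge> norm x ^ 2 / 100"
proof -
  have y0: "Yv b c x 0 \<ge> 0" and y1: "Yv b c x 1 \<ge> 0" using Yv_nonneg assms by blast+
  have "0 \<le> Yv b c x 0 * Yv b c x 1" using y0 y1 by simp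
  then show ?thesis unfolding qform_p3 by (rule poly_lower) (rule norm_le_Y[OF assms])
qed

lemma qform_add: "qform (A + B) x = qform A x + qform B x"
  by (simp add: qform_def matrix_vector_mult_add_rdistrib inner_add_right)

lemma qform_bound:
  fixes E :: "real^'n::finite^'n"
  shows "\<bar>qform E x\<bar> \<le> real CARD('n) * norm E * norm x ^ 2"
proof -
  have "\<bar>qform E x\<bar> \<le> norm x * norm (E *v x)"
    unfolding qform_def by (rule Cauchy_Schwarz_ineq2)
  moreover have "norm (E *v x) \<le> real CARD('n) * norm E * norm x"
  proof -
    have "norm (E *v x) \<le> (\<Sum>i\<in>UNIV. \<bar>(E *v x) $ i\<bar>)" by (rule norm_le_l1_cart)
    also have "\<dots> \<le> (\<Sum>i\<in>(UNIV::'n set). norm E * norm x)"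
    proof (rule sum_mono)
      fix i
      have "\<bar>(E *v x) $ i\<bar> \<le> norm (E$i) * norm x"
        by (simp add: matrix_mult_dot Cauchy_Schwarz_ineq2)
      also have "\<dots> \<le> norm E * norm x"
        using Finite_Cartesian_Product.norm_nth_le[of E i] by (simp add: mult_right_mono)
      finally show "\<bar>(E *v x) $ i\<bar> \<le> norm E * norm x" .
    qed
    finally show ?thesis by simp
  qed
  ultimately show ?thesis
    by (smt (verit) mult.commute mult.left_commute mult_left_mono norm_ge_zero power2_eq_square)
qed

lemma ax_inner: "axis i s \<bullet> ((Q::real^'n::finite^'n) *v axis j t) = s * t * (Q$i$j)"
proof -
  have e: "(\<Sum>ja\<in>UNIV. (Q$i$ja) * (if ja = j then t else 0)) = (\<Sum>ja\<in>UNIV. if ja = j then (Q$i$j)*t else 0)"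
    by (intro sum.cong) auto
  then have "(Q *v axis j t) $ i = (Q$i$j) * t"
    by (simp add: matrix_vector_mult_def axis_def e)
  then show ?thesis by (simp add: inner_axis')
qed

lemma qf3: "qform (Q::real^'n::finite^'n) (axis i s + axis j t + axis k u) =
  s * s * (Q$i$i) + t*t*(Q$j$j) + u*u*(Q$k$k) + s * t * ((Q$i$j) + (Q$j$i)) + s * u * ((Q$i$k) + (Q$k$i)) + t*u*((Q$j$k) + (Q$k$j))"
  by (simp add: qform_def matrix_vector_right_distrib inner_add_left inner_add_right ax_inner algebra_simps)

lemma qf2: "qform (Q::real^'n::finite^'n) (axis i s + axis j t) =
  s * s * (Q$i$i) + t*t*(Q$j$j) + s * t * ((Q$i$j) + (Q$j$i))"
  by (simp add: qform_def matrix_vector_right_distrib inner_add_left inner_add_right ax_inner algebra_simps)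

lemma qf1: "qform (Q::real^'n::finite^'n) (axis i s) = s * s * (Q$i$i)"
  by (simp add: qform_def ax_inner)

lemma pi3_b[simp]: "pi3 b c b = 1" by (simp add: pi3_def)
lemma pi3_c[simp]: "b \<noteq> c \<Longrightarrow> pi3 b c c = 2" by (simp add: pi3_def)
lemma pi3_o[simp]: "i \<noteq> b \<Longrightarrow> i \<noteq> c \<Longrightarrow> pi3 b c i = 0" by (simp add: pi3_def)
lemma lift_entry[simp]: "liftm b c m $ i $ j = m (pi3 b c i) (pi3 b c j)" by (simp add: liftm_def)

lemma sym_lift: "(\<And>r s. m r s = m s r) \<Longrightarrow> sym_mat (liftm b c m)"
  by (simp add: sym_mat_def transpose_def vec_eq_iff)

lemma p3_sym: "p3 r s = p3 s r" by (auto simp: p3_def add.commute)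
lemma s3_sym: "s3 r s = s3 s r" by (auto simp: s3_def add.commute)
lemma n3_sym: "n3 r s = n3 s r" by (auto simp: n3_def add.commute)

lemma sc: "strictly_copositive (liftm b c p3 :: real^'n::finite^'n)"
proof -
  let ?P = "liftm b c p3 :: real^'n^'n"
  have symP: "sym_mat ?P" by (rule sym_lift) (rule p3_sym)
  have cop: "copositive ?P"
    unfolding copositive_def using symP qP_lower
    by (metis divide_nonneg_pos order_trans zero_le_power2 zero_less_numeral)
  define e where "e = 1 / (100 * real CARD('n))"
  have e0: "e > 0" by (simp add: e_def)
  have "\<forall>C. sym_mat C \<and> dist C ?P < e \<longrightarrow> copositive C"
  proof (intro allI impI)
    fix C :: "real^'n^'n" assume H: "sym_mat C \<and> dist C ?P < e"
    show "copositive C" unfolding copositive_def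
    proof (intro conjI allI impI)
      show "sym_mat C" using H by simp
      fix x :: "real^'n" assume x: "\<forall>i. 0 \<le> x $ i"
      have "C = ?P + (C - ?P)" by simp
      then have eq: "qform C x = qform ?P x + qform (C - ?P) x"
        by (metis qform_add)
      have cardpos: "real CARD('n) > 0" by simp
      have "real CARD('n) * norm (C - ?P) \<le> 1/100"
      proof -
        have "norm (C - ?P) < e" using H by (simp add: dist_norm)
        then have "real CARD('n) * norm (C - ?P) \<le> real CARD('n) * e"
          using cardpos by simp
        also have "\<dots> = 1/100" using cardpos by (simp add: e_def)
        finally show ?thesis .
      qed
      then have "real CARD('n) * norm (C - ?P) * norm x ^ 2 \<le> 1/100 * norm x ^ 2"
        by (rule mult_right_mono) simp
      moreover have "\<bar>qform (C - ?P) x\<bar> \<le> real CARD('n) * norm (C - ?P) * norm x ^ 2"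
        by (rule qform_bound)
      moreover have "qform ?P x \<ge> norm x ^ 2 / 100" using qP_lower x by blast
      ultimately show "0 \<le> qform C x" using eq by linarith
    qed
  qed
  then show ?thesis unfolding strictly_copositive_def using cop e0 by blast
qed

lemma Ints_ge1: "(x::real) \<in> \<int> \<Longrightarrow> 0 < x \<Longrightarrow> 1 \<le> x"
  by (elim Ints_cases) simp

lemma int_lower:
  assumes v: "v \<in> nonneg_int_vecs" and nz: "v \<noteq> 0"
  shows "1 \<le> qform (liftm b c p3 :: real^'n::finite^'n) v"
proof -
  have vi: "\<forall>i. v$i \<in> \<int> \<and> v$i \<ge> 0" using v by (simp add: nonneg_int_vecs_def)
  have Y: "\<And>r. Yv b c v r \<in> \<int>" unfolding Yv_def using vi by (intro Ints_sum) auto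
  have "qform (liftm b c p3 :: real^'n::finite^'n) v \<in> \<int>"
    unfolding qform_p3 using Y by (intro Ints_add Ints_diff Ints_mult Ints_power Ints_numeral) auto
  moreover have "qform (liftm b c p3 :: real^'n::finite^'n) v > 0"
  proof -
    have "norm v > 0" using nz by simp
    then have "norm v ^ 2 / 100 > 0" by simp
    moreover have "qform (liftm b c p3 :: real^'n::finite^'n) v \<ge> norm v ^ 2 / 100"
      using qP_lower vi by blast
    ultimately show ?thesis by linarith
  qed
  ultimately show ?thesis by (rule Ints_ge1)
qed

lemma niv3: "s \<in> \<int> \<Longrightarrow> t \<in> \<int> \<Longrightarrow> u \<in> \<int> \<Longrightarrow> 0 \<le> s \<Longrightarrow> 0 \<le> t \<Longrightarrow> 0 \<le> u \<Longrightarrow>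
   axis i s + axis j t + axis k u \<in> (nonneg_int_vecs :: (real^'n::finite) set)"
  by (auto simp: nonneg_int_vecs_def axis_def)
lemma niv2: "s \<in> \<int> \<Longrightarrow> t \<in> \<int> \<Longrightarrow> 0 \<le> s \<Longrightarrow> 0 \<le> t \<Longrightarrow>
   axis i s + axis j t \<in> (nonneg_int_vecs :: (real^'n::finite) set)"
  by (auto simp: nonneg_int_vecs_def axis_def)
lemma niv1: "s \<in> \<int> \<Longrightarrow> 0 \<le> s \<Longrightarrow> axis i s \<in> (nonneg_int_vecs :: (real^'n::finite) set)"
  by (auto simp: nonneg_int_vecs_def axis_def)

lemma mincop:
  assumes "a \<noteq> b" "a \<noteq> c"
  shows "min_cop (liftm b c p3 :: real^'n::finite^'n) = 1"
  unfolding min_cop_def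
proof (rule cInf_eq_minimum)
  have "axis a 1 \<in> (nonneg_int_vecs :: (real^'n) set) - {0}"
    using niv1[of 1 a] by (simp add: axis_eq_0_iff)
  moreover have "qform (liftm b c p3 :: real^'n::finite^'n) (axis a 1) = 1"
    using assms by (simp add: qf1 p3_def)
  ultimately show "1 \<in> qform (liftm b c p3 :: real^'n::finite^'n) ` (nonneg_int_vecs - {0})"
    by (metis image_eqI)
next
  fix x assume "x \<in> qform (liftm b c p3 :: real^'n::finite^'n) ` (nonneg_int_vecs - {0})"
  then show "1 \<le> x" using int_lower by auto
qed

lemma pinned:
  fixes Q :: "real^'n::finite^'n"
  assumes ab: "a \<noteq> b" and ac: "a \<noteq> c" and bc: "b \<noteq> c"
    and symQ: "sym_mat Q"
    and h: "\<forall>v\<in>Min_cop (liftm b c p3 :: real^'n^'n). qform Q v = min_cop (liftm b c p3 :: real^'n^'n)"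
  shows "Q = liftm b c p3"
proof -
  let ?P = "liftm b c p3 :: real^'n^'n"
  have mc: "min_cop ?P = 1" using mincop ab ac .
  have M: "\<And>v. v \<in> nonneg_int_vecs \<Longrightarrow> qform ?P v = 1 \<Longrightarrow> qform Q v = 1"
    using h mc by (simp add: Min_cop_def)
  have Qs: "\<And>i j. Q$i$j = Q$j$i"
  proof -
    fix i j
    have "transpose Q $ i $ j = Q $ i $ j" using symQ by (simp add: sym_mat_def)
    then show "Q$i$j = Q$j$i" by (simp add: transpose_def)
  qed
  have e1: "Q$b$b + Q$c$c + 2*(Q$b$c) = 1"
    using M[OF niv2[of 1 1 b c]] bc Qs[of c b] by (simp add: qf2 p3_def)
  have e2: "4*(Q$b$b) + Q$c$c + 4*(Q$b$c) = 1"
    using M[OF niv2[of 2 1 b c]] bc Qs[of c b] by (simp add: qf2 p3_def)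
  have e3: "9*(Q$b$b) + 4*(Q$c$c) + 12*(Q$b$c) = 1"
    using M[OF niv2[of 3 2 b c]] bc Qs[of c b] by (simp add: qf2 p3_def)
  have Qbb: "Q$b$b = 3" and Qcc: "Q$c$c = 7" and Qbc: "Q$b$c = -9/2"
    using e1 e2 e3 by linarith+
  have QAA: "\<And>i. i \<noteq> b \<Longrightarrow> i \<noteq> c \<Longrightarrow> Q$i$i = 1"
    using M[OF niv1[of 1]] by (simp add: qf1 p3_def)
  have QAc: "\<And>i. i \<noteq> b \<Longrightarrow> i \<noteq> c \<Longrightarrow> Q$i$c = -5/2"
  proof -
    fix i assume i: "i \<noteq> b" "i \<noteq> c"
    have "4*(Q$i$i) + Q$c$c + 4*(Q$i$c) = 1"
      using M[OF niv2[of 2 1 i c]] i bc Qs[of c i] by (simp add: qf2 p3_def)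
    then show "Q$i$c = -5/2" using QAA[OF i] Qcc by linarith
  qed
  have QAb: "\<And>i. i \<noteq> b \<Longrightarrow> i \<noteq> c \<Longrightarrow> Q$i$b = 2"
  proof -
    fix i assume i: "i \<noteq> b" "i \<noteq> c"
    have "Q$i$i + Q$b$b + Q$c$c + 2*(Q$i$b) + 2*(Q$i$c) + 2*(Q$b$c) = 1"
      using M[OF niv3[of 1 1 1 i b c]] i bc Qs[of c i] Qs[of b i] Qs[of c b] by (simp add: qf3 p3_def)
    then show "Q$i$b = 2" using QAA[OF i] Qcc Qbb Qbc QAc[OF i] by linarith
  qed
  have QAk: "\<And>i k. i \<noteq> b \<Longrightarrow> i \<noteq> c \<Longrightarrow> k \<noteq> b \<Longrightarrow> k \<noteq> c \<Longrightarrow> i \<noteq> k \<Longrightarrow> Q$i$k = 1"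
  proof -
    fix i k assume i: "i \<noteq> b" "i \<noteq> c" and k: "k \<noteq> b" "k \<noteq> c" and ik: "i \<noteq> k"
    have "Q$i$i + Q$k$k + Q$c$c + 2*(Q$i$k) + 2*(Q$i$c) + 2*(Q$k$c) = 1"
      using M[OF niv3[of 1 1 1 i k c]] i k ik bc Qs[of c i] Qs[of k i] Qs[of c k] by (simp add: qf3 p3_def)
    then show "Q$i$k = 1" using QAA[OF i] QAA[OF k] Qcc QAc[OF i] QAc[OF k] by linarith
  qed
  have fin: "Q$i$j = p3 (pi3 b c i) (pi3 b c j)" for i j
  proof (cases "i = b")
    case ib: True
    show ?thesis
    proof (cases "j = b")
      case True then show ?thesis using ib Qbb by (simp add: p3_def)
    next
      case jb: False
      show ?thesis
      proof (cases "j = c")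
        case True then show ?thesis using ib bc Qbc by (simp add: p3_def)
      next
        case False
        have "Q$b$j = Q$j$b" by (rule Qs)
        then show ?thesis using ib jb False QAb[OF jb False] by (simp add: p3_def)
      qed
    qed
  next
    case ib: False
    show ?thesis
    proof (cases "i = c")
      case ic: True
      show ?thesis
      proof (cases "j = b")
        case True
        have "Q$c$b = Q$b$c" by (rule Qs)
        then show ?thesis using ic True bc Qbc by (simp add: p3_def)
      next
        case jb: False
        show ?thesis
        proof (cases "j = c")
          case True then show ?thesis using ic bc Qcc by (simp add: p3_def)
        next
          case False
          have "Q$c$j = Q$j$c" by (rule Qs)
          then show ?thesis using ic jb False bc QAc[OF jb False] by (simp add: p3_def)
        qed
      qed
    next
      case ic: False
      show ?thesis
      proof (cases "j = b")
        case True then show ?thesis using ib ic QAb[OF ib ic] by (simp add: p3_def)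
      next
        case jb: False
        show ?thesis
        proof (cases "j = c")
          case True then show ?thesis using ib ic jb bc QAc[OF ib ic] by (simp add: p3_def)
        next
          case jc: False
          show ?thesis
          proof (cases "i = j")
            case True then show ?thesis using ib ic QAA[OF ib ic] by (simp add: p3_def)
          next
            case False then show ?thesis using ib ic jb jc QAk[OF ib ic jb jc False] by (simp add: p3_def)
          qed
        qed
      qed
    qed
  qed
  show ?thesis by (simp add: vec_eq_iff fin)
qed

theorem corollary5p6:
  assumes "CARD('n::finite) \<ge> 3"
  shows "\<exists>P :: real^'n^'n. perfect_copositive P \<and>
           (\<exists>S N. psd_mat S \<and> nonneg_mat N \<and> P = S + N) \<and>
           \<not> psd_mat P \<and> \<not> nonneg_mat P"
proof -
  obtain T :: "'n set" where "card T = 3"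
    using obtain_subset_with_card_n[OF assms] by metis
  then obtain a b c :: 'n where ab: "a \<noteq> b" and bc: "b \<noteq> c" and ac: "a \<noteq> c"
    by (auto simp: card_3_iff)
  let ?P = "liftm b c p3 :: real^'n^'n"
  have perf: "perfect_copositive ?P"
    unfolding perfect_copositive_def
  proof (intro conjI allI)
    show "strictly_copositive ?P" by (rule sc)
    fix Q :: "real^'n^'n"
    show "(sym_mat Q \<and> (\<forall>v\<in>Min_cop ?P. qform Q v = min_cop ?P)) = (Q = ?P)"
    proof
      assume "sym_mat Q \<and> (\<forall>v\<in>Min_cop ?P. qform Q v = min_cop ?P)"
      then show "Q = ?P" using pinned[OF ab ac bc] by blast
    next
      assume "Q = ?P"
      then show "sym_mat Q \<and> (\<forall>v\<in>Min_cop ?P. qform Q v = min_cop ?P)"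
        using sym_lift[of p3 b c] p3_sym by (simp add: Min_cop_def)
    qed
  qed
  have dec: "?P = liftm b c s3 + liftm b c n3"
    by (simp add: vec_eq_iff p3_def s3_def n3_def)
  have psdS: "psd_mat (liftm b c s3 :: real^'n^'n)"
    unfolding psd_mat_def
  proof (intro conjI allI)
    show "sym_mat (liftm b c s3 :: real^'n^'n)" by (rule sym_lift) (rule s3_sym)
    fix v :: "real^'n"
    have "0 \<le> (Yv b c v 0^2 + Yv b c v 1^2 + Yv b c v 2^2)/100" by simp
    then show "0 \<le> qform (liftm b c s3 :: real^'n^'n) v"
      unfolding qform_s3 using sform_pos[of "Yv b c v 0" "Yv b c v 1" "Yv b c v 2"] by linarith
  qed
  have nnN: "nonneg_mat (liftm b c n3 :: real^'n^'n)"
    unfolding nonneg_mat_def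
    by (auto intro: sym_lift n3_sym simp: n3_def)
  have npsd: "\<not> psd_mat ?P"
  proof
    assume "psd_mat ?P"
    then have "0 \<le> qform ?P (axis a 2 + axis b (-1))" by (simp add: psd_mat_def)
    moreover have "qform ?P (axis a 2 + axis b (-1)) = -1"
      using ab ac bc by (simp add: qf2 p3_def)
    ultimately show False by simp
  qed
  have nnn: "\<not> nonneg_mat ?P"
  proof
    assume "nonneg_mat ?P"
    then have "0 \<le> ?P $ a $ c" by (simp add: nonneg_mat_def)
    moreover have "?P $ a $ c = -5/2" using ab ac bc by (simp add: p3_def)
    ultimately show False by simp
  qed
  show ?thesis using perf psdS nnN dec npsd nnn by blast
qed

end
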